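(* Let $X$ be a quantity space over a field $K$. (1) $X/{\sim}$ is a free abelian group of finite rank. (2) Any two bases for $X/{\sim}$ have the same number of elements, any basis for $X$ has the same number of elements as any basis for $X/{\sim}$, and any two bases for $X$ have the same number of elements.
   Context: A scalable monoid over a field $K$ is a monoid $X$ (written multiplicatively, unit $\mathbf{1}=1_X$) with a map $K\times X\to X$, $(\alpha,x)\mapsto\alpha x$, such that $1x=x$, $\alpha(\beta x)=(\alpha\beta)x$, and $\alpha(xy)=(\alpha x)y=x(\alpha y)$ for all $\alpha,\beta\in K$, $x,y\in X$. It is commutative if $xy=yx$ for all $x,y$. For invertible $b$, $b^0=\mathbf{1}$ and negative powers are powers of $b^{-1}$. A (finite) basis of a commutative scalable monoid $X$ over $K$ is a finite set $B=\{b_1,\ldots,b_n\}$ of invertible elements of $X$ such that every $x\in X$ has an expansion $x=\mu\prod_{i=1}^n b_i^{k_i}$ with $\mu\in K$ and $k_1,\ldots,k_n\in\mathbb{Z}$, and this expansion is unique (i.e. $\mu$ and $(k_1,\ldots,k_n)$ are uniquely determined by $x$). A quantity space over $K$ is a commutative scalable monoid over $K$ that has a finite basis. Elements $x,y$ are commensurable, $x\sim y$, if $\alpha x=\beta y$ for some $\alpha,\beta\in K$; this is an equivalence relation and a congruence, its classes are called realms (dimensions), $[x]$ is the realm of $x$, and $X/{\sim}$ is the set of realms with product $[x][y]=[xy]$ and unit $[\mathbf{1}]$. A basis of $X/{\sim}$ is a finite set $\{c_1,\ldots,c_n\}\subseteq X/{\sim}$ such that every element of $X/{\sim}$ can be written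 uniquely as $\prod_{i=1}^n c_i^{k_i}$ with $k_i\in\mathbb{Z}$. *)

theory Defs
  imports "HOL-Algebra.Algebra"
begin



definition scalable_monoid :: "'x monoid \<Rightarrow> ('k::field \<Rightarrow> 'x \<Rightarrow> 'x) \<Rightarrow> bool" where
  "scalable_monoid Q smul \<longleftrightarrow> monoid Q
     \<and> (\<forall>a. \<forall>x\<in>carrier Q. smul a x \<in> carrier Q)
     \<and> (\<forall>x\<in>carrier Q. smul (1::'k) x = x)
     \<and> (\<forall>a b. \<forall>x\<in>carrier Q. smul a (smul b x) = smul (times a b) x)
     \<and> (\<forall>a. \<forall>x\<in>carrier Q. \<forall>y\<in>carrier Q.
           smul a (x \<otimes>\<^bsub>Q\<^esub> y) = (smul a x) \<otimes>\<^bsub>Q\<^esub> y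
         \<and> smul a (x \<otimes>\<^bsub>Q\<^esub> y) = x \<otimes>\<^bsub>Q\<^esub> (smul a y))"

definition comm_scalable_monoid :: "'x monoid \<Rightarrow> ('k::field \<Rightarrow> 'x \<Rightarrow> 'x) \<Rightarrow> bool" where
  "comm_scalable_monoid Q smul \<longleftrightarrow> scalable_monoid Q smul \<and> comm_monoid Q"



definition qs_basis :: "'x monoid \<Rightarrow> ('k::field \<Rightarrow> 'x \<Rightarrow> 'x) \<Rightarrow> 'x set \<Rightarrow> bool" where
  "qs_basis Q smul B \<longleftrightarrow> finite B \<and> B \<subseteq> Units Q
     \<and> (\<forall>x\<in>carrier Q. \<exists>!p :: 'k \<times> ('x \<Rightarrow> int).
            snd p \<in> extensional B
          \<and> x = smul (fst p) (finprod Q (\<lambda>b. b [^]\<^bsub>Q\<^esub> (snd p b)) B))"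

definition quantity_space :: "'x monoid \<Rightarrow> ('k::field \<Rightarrow> 'x \<Rightarrow> 'x) \<Rightarrow> bool" where
  "quantity_space Q smul \<longleftrightarrow> comm_scalable_monoid Q smul \<and> (\<exists>B. qs_basis Q smul B)"

definition commensurable :: "'x monoid \<Rightarrow> ('k::field \<Rightarrow> 'x \<Rightarrow> 'x) \<Rightarrow> 'x \<Rightarrow> 'x \<Rightarrow> bool" where
  "commensurable Q smul x y \<longleftrightarrow> (\<exists>a b. smul a x = smul b y)"

definition comm_rel :: "'x monoid \<Rightarrow> ('k::field \<Rightarrow> 'x \<Rightarrow> 'x) \<Rightarrow> ('x \<times> 'x) set" where
  "comm_rel Q smul = {(x, y). x \<in> carrier Q \<and> y \<in> carrier Q \<and> commensurable Q smul x y}"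



definition realm :: "'x monoid \<Rightarrow> ('k::field \<Rightarrow> 'x \<Rightarrow> 'x) \<Rightarrow> 'x \<Rightarrow> 'x set" where
  "realm Q smul x = comm_rel Q smul `` {x}"

definition realms :: "'x monoid \<Rightarrow> ('k::field \<Rightarrow> 'x \<Rightarrow> 'x) \<Rightarrow> 'x set monoid" where
  "realms Q smul =
     \<lparr> carrier = carrier Q // comm_rel Q smul,
       monoid.mult = (\<lambda>A B. \<Union>x\<in>A. \<Union>y\<in>B. realm Q smul (x \<otimes>\<^bsub>Q\<^esub> y)),
       one = realm Q smul \<one>\<^bsub>Q\<^esub> \<rparr>"



definition realms_basis :: "'x monoid \<Rightarrow> ('k::field \<Rightarrow> 'x \<Rightarrow> 'x) \<Rightarrow> 'x set set \<Rightarrow> bool" where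
  "realms_basis Q smul C \<longleftrightarrow> finite C \<and> C \<subseteq> carrier (realms Q smul)
     \<and> (\<forall>r\<in>carrier (realms Q smul). \<exists>!k :: 'x set \<Rightarrow> int. k \<in> extensional C
          \<and> r = finprod (realms Q smul) (\<lambda>c. c [^]\<^bsub>realms Q smul\<^esub> (k c)) C)"

end

theory Submission
  imports Defs
begin


definition gbasis :: "('a,'b) monoid_scheme \<Rightarrow> 'a set \<Rightarrow> bool" where
 "gbasis G C \<longleftrightarrow> finite C \<and> C \<subseteq> carrier G \<and> (\<forall>r\<in>carrier G. \<exists>!k::'a\<Rightarrow>int. k \<in> extensional C
          \<and> r = finprod G (\<lambda>c. c [^]\<^bsub>G\<^esub> (k c)) C)"

lemma card_image_rel:
  assumes "\<And>x y. x \<in> A \<Longrightarrow> y \<in> A \<Longrightarrow> f x = f y \<longleftrightarrow> g x = g y"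
  shows "card (f ` A) = card (g ` A)"
proof -
  have "bij_betw (\<lambda>z. g (inv_into A f z)) (f ` A) (g ` A)"
    unfolding bij_betw_def inj_on_def
  proof (intro conjI ballI impI)
    fix x y assume x: "x \<in> f ` A" and y: "y \<in> f ` A" and e: "g (inv_into A f x) = g (inv_into A f y)"
    have "inv_into A f x \<in> A" "inv_into A f y \<in> A" using x y by (auto intro: inv_into_into)
    then have "f (inv_into A f x) = f (inv_into A f y)" using assms e by blast
    then show "x = y" using x y by (simp add: f_inv_into_f)
  next
    show "(\<lambda>z. g (inv_into A f z)) ` f ` A = g ` A"
    proof
      show "(\<lambda>z. g (inv_into A f z)) ` f ` A \<subseteq> g ` A" by (auto intro: inv_into_into)
      show "g ` A \<subseteq> (\<lambda>z. g (inv_into A f z)) ` f ` A"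
      proof
        fix z assume "z \<in> g ` A" then obtain a where a: "a \<in> A" "z = g a" by blast
        have i: "inv_into A f (f a) \<in> A" using a by (auto intro: inv_into_into)
        have "f (inv_into A f (f a)) = f a" using a by (simp add: f_inv_into_f)
        then have "g (inv_into A f (f a)) = g a" using assms i a by blast
        then show "z \<in> (\<lambda>z. g (inv_into A f z)) ` f ` A" using a by force
      qed
    qed
  qed
  then show ?thesis by (rule bij_betw_same_card)
qed

locale gb = comm_group G for G (structure) + fixes C assumes basis: "gbasis G C"
begin

lemma finC: "finite C" and CG: "C \<subseteq> carrier G"
  using basis by (auto simp: gbasis_def)

definition pw :: "('a \<Rightarrow> int) \<Rightarrow> 'a" where "pw k = finprod G (\<lambda>c. c [^] (k c)) C"

lemma pw_Pi: "(\<lambda>c. c [^] (k c::int)) \<in> C \<rightarrow> carrier G"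
  using CG by auto

lemma pw_closed: "pw k \<in> carrier G"
  unfolding pw_def using pw_Pi by simp

lemma pw_cong: "(\<And>c. c \<in> C \<Longrightarrow> k1 c = k2 c) \<Longrightarrow> pw k1 = pw k2"
  unfolding pw_def by (intro finprod_cong) (auto simp: pw_Pi)

lemma pw_mult: "pw k1 \<otimes> pw k2 = pw (\<lambda>c. k1 c + k2 c)"
proof -
  have "pw (\<lambda>c. k1 c + k2 c) = finprod G (\<lambda>c. c [^] (k1 c) \<otimes> c [^] (k2 c)) C"
    unfolding pw_def using CG by (intro finprod_cong) (auto simp: int_pow_mult pw_Pi simp_implies_def)
  also have "\<dots> = pw k1 \<otimes> pw k2" unfolding pw_def using pw_Pi by simp
  finally show ?thesis by simp
qed

definition coord :: "'a \<Rightarrow> 'a \<Rightarrow> int" where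
  "coord r = (THE k. k \<in> extensional C \<and> r = pw k)"

lemma ex1: "r \<in> carrier G \<Longrightarrow> \<exists>!k. k \<in> extensional C \<and> r = pw k"
  using basis unfolding gbasis_def pw_def by blast

lemma coord: "r \<in> carrier G \<Longrightarrow> coord r \<in> extensional C \<and> r = pw (coord r)"
  using theI'[OF ex1] unfolding coord_def by blast

lemma coord_unique: "r \<in> carrier G \<Longrightarrow> k \<in> extensional C \<Longrightarrow> r = pw k \<Longrightarrow> coord r = k"
  unfolding coord_def by (rule the1_equality) (use ex1 in auto)

lemma coord_pw: "coord (pw k) = restrict k C"
  by (rule coord_unique) (auto simp: pw_closed intro: pw_cong)

definition phi :: "'a \<Rightarrow> 'a \<Rightarrow> bool" where
  "phi r = restrict (\<lambda>c. odd (coord r c)) C"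

lemma phi_iff:
  assumes r: "r \<in> carrier G" and s: "s \<in> carrier G"
  shows "phi r = phi s \<longleftrightarrow> (\<exists>f\<in>carrier G. r = s \<otimes> (f \<otimes> f))"
proof
  assume "\<exists>f\<in>carrier G. r = s \<otimes> (f \<otimes> f)"
  then obtain f where f: "f \<in> carrier G" "r = s \<otimes> (f \<otimes> f)" by blast
  have "r = pw (coord s) \<otimes> (pw (coord f) \<otimes> pw (coord f))"
    using f coord s by metis
  also have "\<dots> = pw (\<lambda>c. coord s c + (coord f c + coord f c))" by (simp add: pw_mult)
  finally have "coord r = restrict (\<lambda>c. coord s c + (coord f c + coord f c)) C"
    using coord_pw by simp
  then show "phi r = phi s" unfolding phi_def by (intro restrict_ext) auto
next
  assume e: "phi r = phi s"
  have par: "even (coord r c - coord s c)" if "c \<in> C" for c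
    using fun_cong[OF e, of c] that unfolding phi_def by auto
  define d where "d c = (coord r c - coord s c) div 2" for c
  have "s \<otimes> (pw d \<otimes> pw d) = pw (coord s) \<otimes> (pw d \<otimes> pw d)" using coord s by metis
  also have "\<dots> = pw (\<lambda>c. coord s c + (d c + d c))" by (simp add: pw_mult)
  also have "\<dots> = pw (coord r)"
    by (rule pw_cong) (use par in \<open>auto simp: d_def elim!: evenE\<close>)
  also have "\<dots> = r" using coord r by metis
  finally show "\<exists>f\<in>carrier G. r = s \<otimes> (f \<otimes> f)" using pw_closed by metis
qed

lemma phi_image: "phi ` carrier G = PiE C (\<lambda>_. UNIV)"
proof
  show "phi ` carrier G \<subseteq> PiE C (\<lambda>_. UNIV)" unfolding phi_def by auto
  show "PiE C (\<lambda>_. UNIV) \<subseteq> phi ` carrier G"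
  proof
    fix h assume h: "h \<in> PiE C (\<lambda>_. (UNIV::bool set))"
    define k where "k c = (if h c then 1 else 0::int)" for c
    have "phi (pw k) = h" unfolding phi_def coord_pw using h
      by (intro ext) (auto simp: k_def PiE_def extensional_def)
    then show "h \<in> phi ` carrier G" using pw_closed by blast
  qed
qed

lemma card_phi: "card (phi ` carrier G) = 2 ^ card C"
  by (simp add: phi_image card_PiE finC)

end

lemma gbasis_card:
  assumes G: "comm_group G" and "gbasis G C" and "gbasis G C'"
  shows "card C = card C'"
proof -
  interpret A: gb G C using assms by (simp add: gb_def gb_axioms_def)
  interpret B: gb G C' using assms by (simp add: gb_def gb_axioms_def)
  have "card (A.phi ` carrier G) = card (B.phi ` carrier G)"
    by (rule card_image_rel) (simp add: A.phi_iff B.phi_iff)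
  then have "(2::nat) ^ card C = 2 ^ card C'" by (simp add: A.card_phi B.card_phi)
  then show ?thesis by simp
qed



locale qsp =
  fixes Q :: "'x monoid" and smul :: "'k::field \<Rightarrow> 'x \<Rightarrow> 'x"
  assumes qs: "quantity_space Q smul"
begin

lemma cmQ: "comm_monoid Q"
  using qs by (simp add: quantity_space_def comm_scalable_monoid_def)

sublocale Q: comm_monoid Q by (rule cmQ)

lemma smA: "scalable_monoid Q smul"
  using qs by (simp add: quantity_space_def comm_scalable_monoid_def)

lemma sm: "x \<in> carrier Q \<Longrightarrow> smul a x \<in> carrier Q"
  using smA unfolding scalable_monoid_def by blast
lemma sm_one: "x \<in> carrier Q \<Longrightarrow> smul 1 x = x"
  using smA unfolding scalable_monoid_def by blast
lemma sm_assoc: "x \<in> carrier Q \<Longrightarrow> smul a (smul b x) = smul (a * b) x"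
  using smA unfolding scalable_monoid_def by blast
lemma sm_left: "x \<in> carrier Q \<Longrightarrow> y \<in> carrier Q \<Longrightarrow> smul a (x \<otimes>\<^bsub>Q\<^esub> y) = smul a x \<otimes>\<^bsub>Q\<^esub> y"
  using smA unfolding scalable_monoid_def by blast
lemma sm_right: "x \<in> carrier Q \<Longrightarrow> y \<in> carrier Q \<Longrightarrow> smul a (x \<otimes>\<^bsub>Q\<^esub> y) = x \<otimes>\<^bsub>Q\<^esub> smul a y"
  using smA unfolding scalable_monoid_def by blast

abbreviation R where "R \<equiv> realms Q smul"
abbreviation rel where "rel \<equiv> comm_rel Q smul"

lemma rel_iff: "(x, y) \<in> rel \<longleftrightarrow> x \<in> carrier Q \<and> y \<in> carrier Q \<and> (\<exists>a b. smul a x = smul b y)"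
  by (simp add: comm_rel_def commensurable_def)

lemma equiv_rel: "equiv (carrier Q) rel"
proof (rule equivI)
  show "refl_on (carrier Q) rel" unfolding refl_on_def
    by (auto simp: rel_iff)
  show "rel \<subseteq> carrier Q \<times> carrier Q" by (auto simp: rel_iff)
  show "sym rel" unfolding sym_def rel_iff by metis
  show "trans rel" unfolding trans_def rel_iff
  proof (intro allI impI, elim conjE exE)
    fix x y z a b c d
    assume xyz: "x \<in> carrier Q" "y \<in> carrier Q" "z \<in> carrier Q"
      and e1: "smul a x = smul b y" and e2: "smul c y = smul d z"
    have "smul (c * a) x = smul c (smul a x)" using xyz by (simp add: sm_assoc)
    also have "\<dots> = smul (c * b) y" using xyz e1 by (simp add: sm_assoc)
    also have "\<dots> = smul b (smul c y)" using xyz by (simp add: sm_assoc mult.commute)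
    also have "\<dots> = smul (b * d) z" using xyz e2 by (simp add: sm_assoc)
    finally show "x \<in> carrier Q \<and> z \<in> carrier Q \<and> (\<exists>a b. smul a x = smul b z)" using xyz by blast
  qed
qed

lemma realm_eq: "x \<in> carrier Q \<Longrightarrow> y \<in> carrier Q \<Longrightarrow> realm Q smul x = realm Q smul y \<longleftrightarrow> (x, y) \<in> rel"
  unfolding realm_def by (rule eq_equiv_class_iff[OF equiv_rel])

lemma mem_realm: "y \<in> realm Q smul x \<longleftrightarrow> (x, y) \<in> rel"
  by (simp add: realm_def)

lemma realm_smul: "x \<in> carrier Q \<Longrightarrow> realm Q smul (smul a x) = realm Q smul x"
proof -
  assume x: "x \<in> carrier Q"
  have "smul 1 (smul a x) = smul a x" using x sm sm_one by blast
  then have "(smul a x, x) \<in> rel" using x sm rel_iff by metis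
  then show ?thesis using realm_eq x sm by metis
qed

lemma mult_rel:
  assumes "(x, x') \<in> rel" "(y, y') \<in> rel"
  shows "(x \<otimes>\<^bsub>Q\<^esub> y, x' \<otimes>\<^bsub>Q\<^esub> y') \<in> rel"
proof -
  obtain a b c d where c: "x \<in> carrier Q" "x' \<in> carrier Q" "y \<in> carrier Q" "y' \<in> carrier Q"
    and e1: "smul a x = smul b x'" and e2: "smul c y = smul d y'" using assms unfolding rel_iff by blast
  have "smul (a * c) (x \<otimes>\<^bsub>Q\<^esub> y) = smul a (smul c (x \<otimes>\<^bsub>Q\<^esub> y))"
    using c by (simp add: sm_assoc)
  also have "\<dots> = smul a x \<otimes>\<^bsub>Q\<^esub> smul c y"
    using c by (simp add: sm_left[symmetric] sm_right sm)
  also have "\<dots> = smul b x' \<otimes>\<^bsub>Q\<^esub> smul d y'" using e1 e2 by simp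
  also have "\<dots> = smul b (smul d (x' \<otimes>\<^bsub>Q\<^esub> y'))"
    using c by (simp add: sm_left[symmetric] sm_right sm)
  also have "\<dots> = smul (b * d) (x' \<otimes>\<^bsub>Q\<^esub> y')"
    using c by (simp add: sm_assoc)
  finally show ?thesis using c by (auto simp: rel_iff)
qed

lemma realm_in: "x \<in> carrier Q \<Longrightarrow> realm Q smul x \<in> carrier R"
  by (simp add: realms_def realm_def quotientI)

lemma carrier_R: "r \<in> carrier R \<Longrightarrow> \<exists>x\<in>carrier Q. r = realm Q smul x"
  by (auto simp: realms_def realm_def quotient_def)

lemma one_R: "\<one>\<^bsub>R\<^esub> = realm Q smul \<one>\<^bsub>Q\<^esub>"
  by (simp add: realms_def)

lemma realm_mult:
  assumes x: "x \<in> carrier Q" and y: "y \<in> carrier Q"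
  shows "realm Q smul x \<otimes>\<^bsub>R\<^esub> realm Q smul y = realm Q smul (x \<otimes>\<^bsub>Q\<^esub> y)"
proof -
  have k: "realm Q smul (x' \<otimes>\<^bsub>Q\<^esub> y') = realm Q smul (x \<otimes>\<^bsub>Q\<^esub> y)"
    if "x' \<in> realm Q smul x" "y' \<in> realm Q smul y" for x' y'
  proof -
    have r: "(x \<otimes>\<^bsub>Q\<^esub> y, x' \<otimes>\<^bsub>Q\<^esub> y') \<in> rel" using that mult_rel unfolding mem_realm by blast
    then have "x \<otimes>\<^bsub>Q\<^esub> y \<in> carrier Q" "x' \<otimes>\<^bsub>Q\<^esub> y' \<in> carrier Q" unfolding rel_iff by auto
    then have "realm Q smul (x \<otimes>\<^bsub>Q\<^esub> y) = realm Q smul (x' \<otimes>\<^bsub>Q\<^esub> y')" using realm_eq r by simp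
    then show ?thesis by simp
  qed
  have xy: "x \<in> realm Q smul x" "y \<in> realm Q smul y" using x y unfolding mem_realm rel_iff by auto
  have "(\<Union>x'\<in>realm Q smul x. \<Union>y'\<in>realm Q smul y. realm Q smul (x' \<otimes>\<^bsub>Q\<^esub> y')) = realm Q smul (x \<otimes>\<^bsub>Q\<^esub> y)"
  proof
    show "(\<Union>x'\<in>realm Q smul x. \<Union>y'\<in>realm Q smul y. realm Q smul (x' \<otimes>\<^bsub>Q\<^esub> y')) \<subseteq> realm Q smul (x \<otimes>\<^bsub>Q\<^esub> y)"
      using k by blast
    show "realm Q smul (x \<otimes>\<^bsub>Q\<^esub> y) \<subseteq> (\<Union>x'\<in>realm Q smul x. \<Union>y'\<in>realm Q smul y. realm Q smul (x' \<otimes>\<^bsub>Q\<^esub> y'))"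
      using xy by blast
  qed
  then show ?thesis unfolding realms_def by simp
qed

lemma units_finprod:
  assumes "finite A" "f \<in> A \<rightarrow> Units Q"
  shows "finprod Q f A \<in> Units Q"
  using assms
proof (induction A rule: finite_induct)
  case empty then show ?case by simp
next
  case (insert a A)
  have fc: "f \<in> insert a A \<rightarrow> carrier Q" using insert.prems Q.Units_closed by blast
  have "finprod Q f (insert a A) = f a \<otimes>\<^bsub>Q\<^esub> finprod Q f A"
    by (rule Q.finprod_insert) (use insert.hyps fc in auto)
  moreover have "f a \<in> Units Q" "finprod Q f A \<in> Units Q" using insert by auto
  ultimately show ?case by simp
qed

lemma units_int_pow: "u \<in> Units Q \<Longrightarrow> u [^]\<^bsub>Q\<^esub> (k::int) \<in> Units Q"
proof -
  assume u: "u \<in> Units Q"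
  have "u [^]\<^bsub>Q\<^esub> (nat (- k)) \<in> Units Q" "u [^]\<^bsub>Q\<^esub> (nat k) \<in> Units Q"
    using u by (rule Q.Units_pow_closed)+
  then show ?thesis unfolding int_pow_def2 by (auto intro: Q.Units_inv_Units)
qed

lemma ex_unit: "x \<in> carrier Q \<Longrightarrow> \<exists>a u. u \<in> Units Q \<and> x = smul a u"
proof -
  assume x: "x \<in> carrier Q"
  obtain B where B: "qs_basis Q smul B" using qs unfolding quantity_space_def by blast
  have "\<exists>!p :: 'k \<times> ('x \<Rightarrow> int). snd p \<in> extensional B
          \<and> x = smul (fst p) (finprod Q (\<lambda>b. b [^]\<^bsub>Q\<^esub> (snd p b)) B)"
    using B x unfolding qs_basis_def by blast
  then obtain p :: "'k \<times> ('x \<Rightarrow> int)" where p: "x = smul (fst p) (finprod Q (\<lambda>b. b [^]\<^bsub>Q\<^esub> (snd p b)) B)"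
    by (rule ex1E) blast
  have "finprod Q (\<lambda>b. b [^]\<^bsub>Q\<^esub> (snd p b)) B \<in> Units Q"
    using B unfolding qs_basis_def by (intro units_finprod) (auto intro: units_int_pow)
  then show ?thesis using p by blast
qed

lemma group_R: "comm_group R"
proof (rule comm_groupI)
  fix r s assume "r \<in> carrier R" "s \<in> carrier R"
  then obtain x y where "x \<in> carrier Q" "y \<in> carrier Q" "r = realm Q smul x" "s = realm Q smul y"
    using carrier_R by metis
  then show "r \<otimes>\<^bsub>R\<^esub> s \<in> carrier R" "r \<otimes>\<^bsub>R\<^esub> s = s \<otimes>\<^bsub>R\<^esub> r"
    by (auto simp: realm_mult realm_in Q.m_comm)
next
  show "\<one>\<^bsub>R\<^esub> \<in> carrier R" by (simp add: one_R realm_in)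
next
  fix r s t assume "r \<in> carrier R" "s \<in> carrier R" "t \<in> carrier R"
  then obtain x y z where "x \<in> carrier Q" "y \<in> carrier Q" "z \<in> carrier Q"
    "r = realm Q smul x" "s = realm Q smul y" "t = realm Q smul z"
    using carrier_R by metis
  then show "r \<otimes>\<^bsub>R\<^esub> s \<otimes>\<^bsub>R\<^esub> t = r \<otimes>\<^bsub>R\<^esub> (s \<otimes>\<^bsub>R\<^esub> t)"
    by (simp add: realm_mult Q.m_assoc)
next
  fix r assume "r \<in> carrier R"
  then obtain x where x: "x \<in> carrier Q" "r = realm Q smul x" using carrier_R by metis
  then show "\<one>\<^bsub>R\<^esub> \<otimes>\<^bsub>R\<^esub> r = r" by (simp add: one_R realm_mult)
  obtain a u where u: "u \<in> Units Q" "x = smul a u" using ex_unit x by blast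
  have "realm Q smul (inv\<^bsub>Q\<^esub> u) \<otimes>\<^bsub>R\<^esub> r = realm Q smul (inv\<^bsub>Q\<^esub> u \<otimes>\<^bsub>Q\<^esub> smul a u)"
    using x u by (simp add: realm_mult Q.Units_inv_closed Q.Units_closed sm)
  also have "\<dots> = realm Q smul (smul a (inv\<^bsub>Q\<^esub> u \<otimes>\<^bsub>Q\<^esub> u))"
    using u by (simp add: sm_right[symmetric] Q.Units_closed Q.Units_inv_closed)
  also have "\<dots> = \<one>\<^bsub>R\<^esub>" using u by (simp add: realm_smul one_R)
  finally show "\<exists>y\<in>carrier R. y \<otimes>\<^bsub>R\<^esub> r = \<one>\<^bsub>R\<^esub>" using u realm_in by blast
qed

sublocale R: comm_group R by (rule group_R)

lemma realm_nat_pow: "x \<in> carrier Q \<Longrightarrow> realm Q smul (x [^]\<^bsub>Q\<^esub> (n::nat)) = realm Q smul x [^]\<^bsub>R\<^esub> n"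
proof (induction n)
  case 0 then show ?case by (simp only: nat_pow_0 one_R)
next
  case (Suc n)
  have "realm Q smul (x [^]\<^bsub>Q\<^esub> Suc n) = realm Q smul (x [^]\<^bsub>Q\<^esub> n \<otimes>\<^bsub>Q\<^esub> x)" by (simp only: nat_pow_Suc)
  also have "\<dots> = realm Q smul (x [^]\<^bsub>Q\<^esub> n) \<otimes>\<^bsub>R\<^esub> realm Q smul x"
    by (rule realm_mult[symmetric]) (use Suc in auto)
  also have "\<dots> = realm Q smul x [^]\<^bsub>R\<^esub> Suc n" using Suc by (simp only: nat_pow_Suc)
  finally show ?case .
qed

lemma realm_inv: "u \<in> Units Q \<Longrightarrow> realm Q smul (inv\<^bsub>Q\<^esub> u) = inv\<^bsub>R\<^esub> (realm Q smul u)"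
proof -
  assume u: "u \<in> Units Q"
  have c: "u \<in> carrier Q" "inv\<^bsub>Q\<^esub> u \<in> carrier Q" using u by auto
  have "realm Q smul (inv\<^bsub>Q\<^esub> u) \<otimes>\<^bsub>R\<^esub> realm Q smul u = \<one>\<^bsub>R\<^esub>"
    using c u by (simp add: realm_mult one_R)
  then show ?thesis using c realm_in by (intro R.inv_equality[symmetric]) auto
qed

lemma realm_int_pow: "u \<in> Units Q \<Longrightarrow> realm Q smul (u [^]\<^bsub>Q\<^esub> (k::int)) = realm Q smul u [^]\<^bsub>R\<^esub> k"
proof -
  assume u: "u \<in> Units Q"
  have c: "u \<in> carrier Q" using u by auto
  have "u [^]\<^bsub>Q\<^esub> (nat (- k)) \<in> Units Q" using u by (rule Q.Units_pow_closed)
  then have "realm Q smul (inv\<^bsub>Q\<^esub> (u [^]\<^bsub>Q\<^esub> (nat (- k)))) = inv\<^bsub>R\<^esub> (realm Q smul u [^]\<^bsub>R\<^esub> (nat (- k)))"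
    using c by (simp del: pow_nat add: realm_inv realm_nat_pow)
  moreover have "realm Q smul (u [^]\<^bsub>Q\<^esub> (nat k)) = realm Q smul u [^]\<^bsub>R\<^esub> (nat k)"
    using c by (rule realm_nat_pow)
  moreover have "u [^]\<^bsub>Q\<^esub> k = (if k < 0 then inv\<^bsub>Q\<^esub> (u [^]\<^bsub>Q\<^esub> (nat (-k))) else u [^]\<^bsub>Q\<^esub> (nat k))"
    by (rule int_pow_def2)
  moreover have "realm Q smul u [^]\<^bsub>R\<^esub> k = (if k < 0 then inv\<^bsub>R\<^esub> (realm Q smul u [^]\<^bsub>R\<^esub> (nat (-k))) else realm Q smul u [^]\<^bsub>R\<^esub> (nat k))"
    by (rule int_pow_def2)
  ultimately show ?thesis by (simp only: if_distrib[of "realm Q smul"])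
qed

lemma realm_finprod:
  assumes "finite A" "f \<in> A \<rightarrow> carrier Q"
  shows "realm Q smul (finprod Q f A) = finprod R (\<lambda>a. realm Q smul (f a)) A"
  using assms
proof (induction A rule: finite_induct)
  case empty then show ?case by (simp add: one_R)
next
  case (insert a A)
  have g: "(\<lambda>a. realm Q smul (f a)) \<in> insert a A \<rightarrow> carrier R" using insert.prems realm_in by auto
  have "finprod Q f (insert a A) = f a \<otimes>\<^bsub>Q\<^esub> finprod Q f A"
    by (rule Q.finprod_insert) (use insert.hyps insert.prems in auto)
  moreover have "finprod R (\<lambda>a. realm Q smul (f a)) (insert a A) = realm Q smul (f a) \<otimes>\<^bsub>R\<^esub> finprod R (\<lambda>a. realm Q smul (f a)) A"
    by (rule R.finprod_insert) (use insert.hyps g in auto)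
  moreover have "f a \<in> carrier Q" "finprod Q f A \<in> carrier Q" using insert.prems by auto
  moreover have "realm Q smul (finprod Q f A) = finprod R (\<lambda>a. realm Q smul (f a)) A"
    using insert by auto
  ultimately show ?case by (simp add: realm_mult[symmetric])
qed

end



context qsp
begin

definition P :: "'x set \<Rightarrow> ('x \<Rightarrow> int) \<Rightarrow> 'x" where
  "P B k = finprod Q (\<lambda>b. b [^]\<^bsub>Q\<^esub> (k b)) B"

lemma basisD: assumes "qs_basis Q smul B"
  shows "finite B" "B \<subseteq> Units Q"
    "x \<in> carrier Q \<Longrightarrow> \<exists>!p :: 'k \<times> ('x \<Rightarrow> int). snd p \<in> extensional B \<and> x = smul (fst p) (P B (snd p))"
  using assms unfolding qs_basis_def P_def by blast+

lemma P_Pi: "B \<subseteq> Units Q \<Longrightarrow> (\<lambda>b. b [^]\<^bsub>Q\<^esub> (k b::int)) \<in> B \<rightarrow> carrier Q"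
  using units_int_pow Q.Units_closed by blast

lemma P_units: "qs_basis Q smul B \<Longrightarrow> P B k \<in> Units Q"
  unfolding P_def using basisD[of B] units_int_pow by (intro units_finprod) auto

lemma P_carrier: "qs_basis Q smul B \<Longrightarrow> P B k \<in> carrier Q"
  using P_units Q.Units_closed by blast

lemma P_cong: "qs_basis Q smul B \<Longrightarrow> (\<And>b. b \<in> B \<Longrightarrow> k1 b = k2 b) \<Longrightarrow> P B k1 = P B k2"
  unfolding P_def using P_Pi[of B k1] basisD(2)[of B]
  by (intro Q.finprod_cong) (auto simp: simp_implies_def)

lemma uniq:
  assumes B: "qs_basis Q smul B" and k: "k1 \<in> extensional B" "k2 \<in> extensional B"
    and e: "smul a1 (P B k1) = smul a2 (P B k2)"
  shows "k1 = k2"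
proof -
  have z: "smul a1 (P B k1) \<in> carrier Q" using B P_carrier sm by blast
  have "(a1, k1) = (a2, k2)"
    using basisD(3)[OF B z] k e by (metis fst_conv snd_conv)
  then show ?thesis by simp
qed

lemma realm_P_eq:
  assumes B: "qs_basis Q smul B" and e: "realm Q smul (P B k1) = realm Q smul (P B k2)"
  shows "\<forall>b\<in>B. k1 b = k2 b"
proof -
  have p1: "P B k1 = P B (restrict k1 B)" "P B k2 = P B (restrict k2 B)"
    by (rule P_cong[OF B], simp)+
  have c: "P B k1 \<in> carrier Q" "P B k2 \<in> carrier Q" by (rule P_carrier[OF B])+
  have "(P B k1, P B k2) \<in> rel" using e realm_eq[OF c] by simp
  then obtain a b where ab: "smul a (P B (restrict k1 B)) = smul b (P B (restrict k2 B))"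
    unfolding rel_iff p1 by blast
  have "restrict k1 B = restrict k2 B"
    by (rule uniq[OF B _ _ ab]) auto
  then show ?thesis by (metis restrict_apply')
qed

lemma pow1: "c \<in> carrier Q \<Longrightarrow> c [^]\<^bsub>Q\<^esub> (1::int) = c"
proof -
  assume c: "c \<in> carrier Q"
  have "c [^]\<^bsub>Q\<^esub> (1::int) = c [^]\<^bsub>Q\<^esub> (nat 1)"
    using int_pow_def2[of Q c "1::int"] by (metis not_one_less_zero)
  also have "\<dots> = c" using c by (simp del: pow_nat)
  finally show ?thesis .
qed

lemma P_delta:
  assumes B: "qs_basis Q smul B" and b: "b \<in> B"
  shows "P B (\<lambda>c. if c = b then 1 else 0) = b"
proof -
  have BU: "B \<subseteq> carrier Q" using basisD(2)[OF B] Q.Units_closed by blast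
  have "P B (\<lambda>c. if c = b then 1 else 0) = finprod Q (\<lambda>c. if b = c then c else \<one>\<^bsub>Q\<^esub>) B"
    unfolding P_def using BU P_Pi[OF basisD(2)[OF B]]
    by (intro Q.finprod_cong) (auto simp: simp_implies_def pow1)
  also have "\<dots> = b" using b BU basisD(1)[OF B] by (intro Q.finprod_singleton) auto
  finally show ?thesis .
qed

lemma realm_inj: "qs_basis Q smul B \<Longrightarrow> inj_on (realm Q smul) B"
proof (rule inj_onI)
  fix b b' assume B: "qs_basis Q smul B" and bb: "b \<in> B" "b' \<in> B" and e: "realm Q smul b = realm Q smul b'"
  then have "realm Q smul (P B (\<lambda>c. if c = b then 1 else 0)) = realm Q smul (P B (\<lambda>c. if c = b' then 1 else 0))"
    by (simp add: P_delta)
  then have "\<forall>c\<in>B. (if c = b then 1 else 0::int) = (if c = b' then 1 else 0)"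
    using realm_P_eq[OF B] by blast
  then show "b = b'" using bb by (metis zero_neq_one)
qed

lemma finprod_realm:
  assumes B: "qs_basis Q smul B"
  shows "finprod R (\<lambda>c. c [^]\<^bsub>R\<^esub> (K c :: int)) (realm Q smul ` B) = realm Q smul (P B (\<lambda>b. K (realm Q smul b)))"
proof -
  have BU: "B \<subseteq> Units Q" "B \<subseteq> carrier Q" using basisD(2)[OF B] Q.Units_closed by blast+
  have "finprod R (\<lambda>c. c [^]\<^bsub>R\<^esub> (K c)) (realm Q smul ` B)
      = finprod R (\<lambda>b. realm Q smul b [^]\<^bsub>R\<^esub> (K (realm Q smul b))) B"
    using BU realm_in realm_inj[OF B] by (intro R.finprod_reindex) auto
  also have "\<dots> = finprod R (\<lambda>b. realm Q smul (b [^]\<^bsub>Q\<^esub> (K (realm Q smul b)))) B"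
    using BU realm_in by (intro R.finprod_cong) (auto simp: simp_implies_def realm_int_pow)
  also have "\<dots> = realm Q smul (P B (\<lambda>b. K (realm Q smul b)))"
    unfolding P_def using basisD(1)[OF B] P_Pi[OF BU(1)] by (intro realm_finprod[symmetric]) auto
  finally show ?thesis .
qed

lemma realms_basis_B:
  assumes B: "qs_basis Q smul B"
  shows "realms_basis Q smul (realm Q smul ` B)"
  unfolding realms_basis_def
proof (intro conjI ballI)
  have BU: "B \<subseteq> Units Q" "B \<subseteq> carrier Q" using basisD(2)[OF B] Q.Units_closed by blast+
  show "finite (realm Q smul ` B)" using basisD(1)[OF B] by simp
  show "realm Q smul ` B \<subseteq> carrier R" using BU realm_in by blast
  fix r assume r: "r \<in> carrier R"
  then obtain x where x: "x \<in> carrier Q" "r = realm Q smul x" using carrier_R by blast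
  obtain p where p: "snd p \<in> extensional B" "x = smul (fst p) (P B (snd p))"
    using basisD(3)[OF B x(1)] by blast
  define K where "K = restrict (\<lambda>c. snd p (inv_into B (realm Q smul) c)) (realm Q smul ` B)"
  show "\<exists>!k. k \<in> extensional (realm Q smul ` B) \<and>
           r = finprod R (\<lambda>c. c [^]\<^bsub>R\<^esub> (k c :: int)) (realm Q smul ` B)"
  proof (rule ex1I)
    have "P B (\<lambda>b. K (realm Q smul b)) = P B (snd p)"
      using realm_inj[OF B] by (intro P_cong[OF B]) (simp add: K_def)
    then have "finprod R (\<lambda>c. c [^]\<^bsub>R\<^esub> (K c)) (realm Q smul ` B) = r"
      using finprod_realm[OF B] x p realm_smul P_carrier[OF B] by metis
    then show "K \<in> extensional (realm Q smul ` B) \<and> r = finprod R (\<lambda>c. c [^]\<^bsub>R\<^esub> (K c)) (realm Q smul ` B)"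
      by (simp add: K_def)
  next
    fix k assume k: "k \<in> extensional (realm Q smul ` B) \<and> r = finprod R (\<lambda>c. c [^]\<^bsub>R\<^esub> (k c :: int)) (realm Q smul ` B)"
    have K: "K \<in> extensional (realm Q smul ` B)" "r = finprod R (\<lambda>c. c [^]\<^bsub>R\<^esub> (K c)) (realm Q smul ` B)"
    proof -
      have "P B (\<lambda>b. K (realm Q smul b)) = P B (snd p)"
        using realm_inj[OF B] by (intro P_cong[OF B]) (simp add: K_def)
      then show "r = finprod R (\<lambda>c. c [^]\<^bsub>R\<^esub> (K c)) (realm Q smul ` B)"
        using finprod_realm[OF B] x p realm_smul P_carrier[OF B] by metis
    qed (simp add: K_def)
    have "realm Q smul (P B (\<lambda>b. k (realm Q smul b))) = realm Q smul (P B (\<lambda>b. K (realm Q smul b)))"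
      using k K finprod_realm[OF B] by metis
    then have "\<forall>b\<in>B. k (realm Q smul b) = K (realm Q smul b)" using realm_P_eq[OF B] by blast
    then show "k = K" using k K(1) by (intro extensionalityI[of _ "realm Q smul ` B"]) auto
  qed
qed

end

theorem mainTheorem15:
  fixes Q :: "'x monoid" and smul :: "'k::field \<Rightarrow> 'x \<Rightarrow> 'x"
  assumes "quantity_space Q smul"
  shows "(comm_group (realms Q smul) \<and> (\<exists>C. realms_basis Q smul C))
       \<and> (\<forall>C C'. realms_basis Q smul C \<longrightarrow> realms_basis Q smul C' \<longrightarrow> card C = card C')
       \<and> (\<forall>B C. qs_basis Q smul B \<longrightarrow> realms_basis Q smul C \<longrightarrow> card B = card C)
       \<and> (\<forall>B B'. qs_basis Q smul B \<longrightarrow> qs_basis Q smul B' \<longrightarrow> card B = card B')"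
proof -
  interpret qsp Q smul by unfold_locales (rule assms)
  have rb: "realms_basis Q smul C \<longleftrightarrow> gbasis (realms Q smul) C" for C
    by (simp add: realms_basis_def gbasis_def)
  have cc: "card C = card C'" if "realms_basis Q smul C" "realms_basis Q smul C'" for C C'
    using gbasis_card[OF group_R] that rb by blast
  have cb: "card B = card C" if "qs_basis Q smul B" "realms_basis Q smul C" for B C
  proof -
    have "card B = card (realm Q smul ` B)" using realm_inj[OF that(1)] by (simp add: card_image)
    also have "\<dots> = card C" using cc realms_basis_B[OF that(1)] that(2) by blast
    finally show ?thesis .
  qed
  obtain B where B: "qs_basis Q smul B" using assms quantity_space_def by blast
  show ?thesis
  proof (intro conjI allI impI)
    show "comm_group (realms Q smul)" by (rule group_R)
    show "\<exists>C. realms_basis Q smul C" using realms_basis_B[OF B] by blast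
  next
    fix C C' assume "realms_basis Q smul C" "realms_basis Q smul C'" then show "card C = card C'" by (rule cc)
  next
    fix B C assume "qs_basis Q smul B" "realms_basis Q smul C" then show "card B = card C" by (rule cb)
  next
    fix B1 B2 assume "qs_basis Q smul B1" "qs_basis Q smul B2"
    then show "card B1 = card B2" using cb realms_basis_B by metis
  qed
qed

end
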